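(* Let $G$ be a countable directed graph and let $x,y\in\mathcal{V}(G)$ with $x\neq y$. If $A\in\mathcal{T}_+(G)$ and $A+\mathcal{K}_{x,y}\in\operatorname{rad}(\mathcal{T}_+(G)/\mathcal{K}_{x,y})$, then $A+\mathcal{K}_{x,y}=P_yAP_x+\mathcal{K}_{x,y}$.
   Context: A countable directed graph $G$ has countable vertex set $\mathcal{V}(G)$, edge set $\mathcal{E}(G)$, range and source maps $r,s$. The free semigroupoid $\mathbb{F}^+(G)$ consists of vertices and finite paths $w=e_k\cdots e_1$ with $s(e_i)=r(e_{i-1})$, $s(w)=s(e_1)$, $r(w)=r(e_k)$. On $\ell^2(\mathbb{F}^+(G))$ with orthonormal basis $\{\xi_w\}$, $L_e\xi_w=\xi_{ew}$ if $s(e)=r(w)$ and $0$ otherwise, and $P_v$ is the projection onto $\overline{\operatorname{span}}\{\xi_w:r(w)=v\}$. $\mathcal{T}_+(G)$ is the norm-closed operator algebra generated by all $L_e$ and $P_v$. $\mathfrak{M}_{G,x}$ is the set of characters $\rho$ of $\mathcal{T}_+(G)$ with $\rho(P_x)=1$. A two-dimensional nest representation is a continuous homomorphism $\pi$ of $\mathcal{T}_+(G)$ onto the algebra of operators on a 2-dimensional Hilbert space leaving a fixed one-dimensional subspace $N$ invariant; with unit vectors $h_2\in N$, $h_1\in N^\perp$, $\rho^{(i)}_\pi(A)=\langle\pi(A)h_i,h_i\rangle$. $\operatorname{rep}_{x,y}(\mathcal{T}_+(G))$ is the set of such $\pi$ with $\rho^{(1)}_\pi\in\mathfrak{M}_{G,x}$,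 $\rho^{(2)}_\pi\in\mathfrak{M}_{G,y}$; $\mathcal{K}_{x,y}=\bigcap\{\ker\pi:\pi\in\operatorname{rep}_{x,y}(\mathcal{T}_+(G))\}$; $\operatorname{rad}$ denotes the Jacobson radical. *)

theory Defs
  imports "HOL-Analysis.Analysis"
begin

text \<open>Elements of the free semigroupoid: a vertex v is encoded as Inl v; a path
  w = e_k ... e_1 (k \<ge> 1) is encoded as Inr [e_k, ..., e_1].\<close>

definition graph :: "'v set \<Rightarrow> 'e set \<Rightarrow> ('e \<Rightarrow> 'v) \<Rightarrow> ('e \<Rightarrow> 'v) \<Rightarrow> bool" where
  "graph V E r s \<longleftrightarrow> r ` E \<subseteq> V \<and> s ` E \<subseteq> V"

definition is_path :: "'e set \<Rightarrow> ('e \<Rightarrow> 'v) \<Rightarrow> ('e \<Rightarrow> 'v) \<Rightarrow> 'e list \<Rightarrow> bool" where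
  "is_path E r s es \<longleftrightarrow> es \<noteq> [] \<and> set es \<subseteq> E \<and>
     (\<forall>i. Suc i < length es \<longrightarrow> s (es ! i) = r (es ! Suc i))"

definition FP :: "'v set \<Rightarrow> 'e set \<Rightarrow> ('e \<Rightarrow> 'v) \<Rightarrow> ('e \<Rightarrow> 'v) \<Rightarrow> ('v + 'e list) set" where
  "FP V E r s = Inl ` V \<union> Inr ` {es. is_path E r s es}"

fun prange :: "('e \<Rightarrow> 'v) \<Rightarrow> ('v + 'e list) \<Rightarrow> 'v" where
  "prange r (Inl v) = v"
| "prange r (Inr es) = r (hd es)"

type_synonym ('v, 'e) vect = "('v + 'e list) \<Rightarrow> complex"
type_synonym ('v, 'e) oper = "('v, 'e) vect \<Rightarrow> ('v, 'e) vect"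

definition ell2 :: "('v + 'e list) set \<Rightarrow> ('v, 'e) vect set" where
  "ell2 F = {f. (\<forall>w. w \<notin> F \<longrightarrow> f w = 0) \<and> (\<lambda>w. (cmod (f w))\<^sup>2) summable_on UNIV}"

definition l2norm :: "('v, 'e) vect \<Rightarrow> real" where
  "l2norm f = sqrt (\<Sum>\<^sub>\<infinity>w. (cmod (f w))\<^sup>2)"

definition vadd :: "('v, 'e) vect \<Rightarrow> ('v, 'e) vect \<Rightarrow> ('v, 'e) vect" where
  "vadd f g = (\<lambda>w. f w + g w)"

definition vsmul :: "complex \<Rightarrow> ('v, 'e) vect \<Rightarrow> ('v, 'e) vect" where
  "vsmul c f = (\<lambda>w. c * f w)"

text \<open>Bounded (complex-linear) operators on l2(F). To make operators extensional they
  are required to send every function outside l2(F) to 0.\<close>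
definition BOp :: "('v + 'e list) set \<Rightarrow> ('v, 'e) oper set" where
  "BOp F = {T. (\<forall>f. f \<notin> ell2 F \<longrightarrow> T f = (\<lambda>_. 0))
     \<and> (\<forall>f\<in>ell2 F. T f \<in> ell2 F)
     \<and> (\<forall>f\<in>ell2 F. \<forall>g\<in>ell2 F. T (vadd f g) = vadd (T f) (T g))
     \<and> (\<forall>c. \<forall>f\<in>ell2 F. T (vsmul c f) = vsmul c (T f))
     \<and> (\<exists>C. \<forall>f\<in>ell2 F. l2norm (T f) \<le> C * l2norm f)}"

definition opnorm :: "('v + 'e list) set \<Rightarrow> ('v, 'e) oper \<Rightarrow> real" where
  "opnorm F T = Sup {l2norm (T f) | f. f \<in> ell2 F \<and> l2norm f \<le> 1}"

definition oadd :: "('v, 'e) oper \<Rightarrow> ('v, 'e) oper \<Rightarrow> ('v, 'e) oper" where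
  "oadd S T = (\<lambda>f. vadd (S f) (T f))"

definition osub :: "('v, 'e) oper \<Rightarrow> ('v, 'e) oper \<Rightarrow> ('v, 'e) oper" where
  "osub S T = (\<lambda>f. (\<lambda>w. S f w - T f w))"

definition osmul :: "complex \<Rightarrow> ('v, 'e) oper \<Rightarrow> ('v, 'e) oper" where
  "osmul c T = (\<lambda>f. vsmul c (T f))"

definition ocomp :: "('v, 'e) oper \<Rightarrow> ('v, 'e) oper \<Rightarrow> ('v, 'e) oper" where
  "ocomp S T = (\<lambda>f. S (T f))"

text \<open>L_e xi_w = xi_{ew} if s(e) = r(w), and 0 otherwise.\<close>
definition Lop :: "'v set \<Rightarrow> 'e set \<Rightarrow> ('e \<Rightarrow> 'v) \<Rightarrow> ('e \<Rightarrow> 'v) \<Rightarrow> 'e \<Rightarrow> ('v, 'e) oper" where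
  "Lop V E r s e = (\<lambda>f. if f \<in> ell2 (FP V E r s) then
     (\<lambda>u. if u \<in> FP V E r s then
        (case u of Inr (e' # rest) \<Rightarrow>
            if e' = e then (if rest = [] then f (Inl (s e)) else f (Inr rest)) else 0
         | _ \<Rightarrow> 0)
      else 0)
     else (\<lambda>_. 0))"

definition Pop :: "'v set \<Rightarrow> 'e set \<Rightarrow> ('e \<Rightarrow> 'v) \<Rightarrow> ('e \<Rightarrow> 'v) \<Rightarrow> 'v \<Rightarrow> ('v, 'e) oper" where
  "Pop V E r s v = (\<lambda>f. if f \<in> ell2 (FP V E r s) then
     (\<lambda>u. if u \<in> FP V E r s \<and> prange r u = v then f u else 0)
     else (\<lambda>_. 0))"

inductive_set gen_alg :: "('v, 'e) oper set \<Rightarrow> ('v, 'e) oper set" for S where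
  gen: "T \<in> S \<Longrightarrow> T \<in> gen_alg S"
| add: "T \<in> gen_alg S \<Longrightarrow> U \<in> gen_alg S \<Longrightarrow> oadd T U \<in> gen_alg S"
| smul: "T \<in> gen_alg S \<Longrightarrow> osmul c T \<in> gen_alg S"
| comp: "T \<in> gen_alg S \<Longrightarrow> U \<in> gen_alg S \<Longrightarrow> ocomp T U \<in> gen_alg S"

definition Tplus :: "'v set \<Rightarrow> 'e set \<Rightarrow> ('e \<Rightarrow> 'v) \<Rightarrow> ('e \<Rightarrow> 'v) \<Rightarrow> ('v, 'e) oper set" where
  "Tplus V E r s = {T. T \<in> BOp (FP V E r s) \<and>
     (\<forall>\<epsilon>>0. \<exists>S\<in>gen_alg (Lop V E r s ` E \<union> Pop V E r s ` V).
        opnorm (FP V E r s) (osub T S) < \<epsilon>)}"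

definition character :: "('v, 'e) oper set \<Rightarrow> (('v, 'e) oper \<Rightarrow> complex) \<Rightarrow> bool" where
  "character T \<rho> \<longleftrightarrow>
     (\<forall>A\<in>T. \<forall>B\<in>T. \<rho> (oadd A B) = \<rho> A + \<rho> B \<and> \<rho> (ocomp A B) = \<rho> A * \<rho> B)
   \<and> (\<forall>c. \<forall>A\<in>T. \<rho> (osmul c A) = c * \<rho> A)
   \<and> (\<exists>A\<in>T. \<rho> A \<noteq> 0)"

definition Mchar :: "'v set \<Rightarrow> 'e set \<Rightarrow> ('e \<Rightarrow> 'v) \<Rightarrow> ('e \<Rightarrow> 'v) \<Rightarrow> 'v
    \<Rightarrow> (('v, 'e) oper \<Rightarrow> complex) set" where
  "Mchar V E r s x = {\<rho>. character (Tplus V E r s) \<rho> \<and> \<rho> (Pop V E r s x) = 1}"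

text \<open>The 2-dimensional Hilbert space is modelled as complex^2 with standard basis,
  h_1 = e_1 (spanning N^perp) and h_2 = e_2 (spanning the invariant subspace N).
  Operators are 2x2 matrices; those leaving N invariant are those with entry (1,2) = 0.\<close>
definition nest_rep :: "'v set \<Rightarrow> 'e set \<Rightarrow> ('e \<Rightarrow> 'v) \<Rightarrow> ('e \<Rightarrow> 'v) \<Rightarrow>
    (('v, 'e) oper \<Rightarrow> complex ^ 2 ^ 2) \<Rightarrow> bool" where
  "nest_rep V E r s \<pi> \<longleftrightarrow>
     (let T = Tplus V E r s; F = FP V E r s in
       (\<forall>A\<in>T. \<forall>B\<in>T. \<pi> (oadd A B) = \<pi> A + \<pi> B \<and> \<pi> (ocomp A B) = \<pi> A ** \<pi> B)
     \<and> (\<forall>c. \<forall>A\<in>T. \<forall>i j. \<pi> (osmul c A) $ i $ j = c * (\<pi> A $ i $ j))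
     \<and> (\<forall>A\<in>T. \<forall>\<epsilon>>0. \<exists>\<delta>>0. \<forall>B\<in>T. opnorm F (osub B A) < \<delta> \<longrightarrow> dist (\<pi> B) (\<pi> A) < \<epsilon>)
     \<and> \<pi> ` T = {M. M $ 1 $ 2 = 0})"

definition rep_xy :: "'v set \<Rightarrow> 'e set \<Rightarrow> ('e \<Rightarrow> 'v) \<Rightarrow> ('e \<Rightarrow> 'v) \<Rightarrow> 'v \<Rightarrow> 'v \<Rightarrow>
    (('v, 'e) oper \<Rightarrow> complex ^ 2 ^ 2) set" where
  "rep_xy V E r s x y = {\<pi>. nest_rep V E r s \<pi>
      \<and> (\<lambda>A. \<pi> A $ 1 $ 1) \<in> Mchar V E r s x
      \<and> (\<lambda>A. \<pi> A $ 2 $ 2) \<in> Mchar V E r s y}"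

definition Kxy :: "'v set \<Rightarrow> 'e set \<Rightarrow> ('e \<Rightarrow> 'v) \<Rightarrow> ('e \<Rightarrow> 'v) \<Rightarrow> 'v \<Rightarrow> 'v \<Rightarrow> ('v, 'e) oper set" where
  "Kxy V E r s x y = {A \<in> Tplus V E r s. \<forall>\<pi>\<in>rep_xy V E r s x y. \<pi> A = 0}"

text \<open>Jacobson radical of a (not necessarily unital) ring with carrier R:
  the set of a such that r*a is left quasi-regular for every r, i.e. there is c with
  c + r a - c (r a) = 0.\<close>
definition jacobson_rad :: "'a set \<Rightarrow> ('a \<Rightarrow> 'a \<Rightarrow> 'a) \<Rightarrow> ('a \<Rightarrow> 'a \<Rightarrow> 'a) \<Rightarrow> 'a set" where
  "jacobson_rad R add mul = {a \<in> R. \<forall>b\<in>R. \<exists>c\<in>R. add c (mul b a) = mul c (mul b a)}"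

definition coset :: "('v, 'e) oper set \<Rightarrow> ('v, 'e) oper \<Rightarrow> ('v, 'e) oper set" where
  "coset K A = {oadd A k | k. k \<in> K}"

definition qrep :: "('v, 'e) oper set \<Rightarrow> ('v, 'e) oper" where
  "qrep X = (SOME A. A \<in> X)"

definition qadd :: "('v, 'e) oper set \<Rightarrow> ('v, 'e) oper set \<Rightarrow> ('v, 'e) oper set \<Rightarrow> ('v, 'e) oper set" where
  "qadd K X Y = coset K (oadd (qrep X) (qrep Y))"

definition qmul :: "('v, 'e) oper set \<Rightarrow> ('v, 'e) oper set \<Rightarrow> ('v, 'e) oper set \<Rightarrow> ('v, 'e) oper set" where
  "qmul K X Y = coset K (ocomp (qrep X) (qrep Y))"

definition quot_carrier :: "('v, 'e) oper set \<Rightarrow> ('v, 'e) oper set \<Rightarrow> ('v, 'e) oper set set" where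
  "quot_carrier T K = coset K ` T"

end

theory Submission
  imports Defs
begin

lemma ell2_zero: "(\<lambda>_. 0) \<in> ell2 F"
  by (simp add: ell2_def)

lemma ell2_vsmul: "f \<in> ell2 F \<Longrightarrow> vsmul c f \<in> ell2 F"
proof -
  assume f: "f \<in> ell2 F"
  have "(\<lambda>w. (cmod c)\<^sup>2 * (cmod (f w))\<^sup>2) summable_on UNIV"
    using f by (intro summable_on_cmult_right) (simp add: ell2_def)
  then show ?thesis using f by (simp add: ell2_def vsmul_def norm_mult power_mult_distrib)
qed

lemma sq_add_le: "(cmod (a + b))\<^sup>2 \<le> 2 * (cmod a)\<^sup>2 + 2 * (cmod b)\<^sup>2"
proof -
  have "cmod (a + b) \<le> cmod a + cmod b" by (rule norm_triangle_ineq)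
  then have "(cmod (a + b))\<^sup>2 \<le> (cmod a + cmod b)\<^sup>2"
    by (simp add: power_mono)
  also have "\<dots> \<le> 2 * (cmod a)\<^sup>2 + 2 * (cmod b)\<^sup>2"
    by (smt (verit) sum_squares_bound power2_sum)
  finally show ?thesis .
qed

lemma ell2_vadd: "f \<in> ell2 F \<Longrightarrow> g \<in> ell2 F \<Longrightarrow> vadd f g \<in> ell2 F"
proof -
  assume f: "f \<in> ell2 F" and g: "g \<in> ell2 F"
  have "(\<lambda>w. 2 * (cmod (f w))\<^sup>2 + 2 * (cmod (g w))\<^sup>2) summable_on UNIV"
    using f g by (intro summable_on_add summable_on_cmult_right) (auto simp: ell2_def)
  then have "(\<lambda>w. (cmod (f w + g w))\<^sup>2) summable_on UNIV"
    by (rule summable_on_comparison_test) (auto simp: sq_add_le)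
  then show ?thesis using f g by (simp add: ell2_def vadd_def)
qed

lemma l2norm_nonneg: "l2norm f \<ge> 0"
  unfolding l2norm_def by (intro real_sqrt_ge_zero infsum_nonneg) auto

lemma l2norm_zero: "l2norm (\<lambda>_. 0) = 0"
  by (simp add: l2norm_def)

lemma l2norm_vsmul: "l2norm (vsmul c f) = cmod c * l2norm f"
proof -
  have "(\<Sum>\<^sub>\<infinity>w. (cmod (vsmul c f w))\<^sup>2) = (cmod c)\<^sup>2 * (\<Sum>\<^sub>\<infinity>w. (cmod (f w))\<^sup>2)"
    by (simp add: vsmul_def norm_mult power_mult_distrib infsum_cmult_right')
  then show ?thesis by (simp add: l2norm_def real_sqrt_mult)
qed

lemma l2norm_triangle:
  assumes f: "f \<in> ell2 F" and g: "g \<in> ell2 F"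
  shows "l2norm (vadd f g) \<le> l2norm f + l2norm g"
proof -
  let ?a = "\<lambda>w. (cmod (f w))\<^sup>2" and ?b = "\<lambda>w. (cmod (g w))\<^sup>2"
    and ?c = "\<lambda>w. (cmod (f w + g w))\<^sup>2"
  have sa: "?a summable_on UNIV" using f by (simp add: ell2_def)
  have sb: "?b summable_on UNIV" using g by (simp add: ell2_def)
  have sc: "?c summable_on UNIV" using ell2_vadd[OF f g] by (simp add: ell2_def vadd_def)
  have fin: "sum ?c X \<le> (l2norm f + l2norm g)\<^sup>2" if X: "finite X" for X
  proof -
    have "L2_set (\<lambda>w. cmod (f w + g w)) X \<le> L2_set (\<lambda>w. cmod (f w) + cmod (g w)) X"
      by (rule L2_set_mono) (auto simp: norm_triangle_ineq)
    also have "\<dots> \<le> L2_set (\<lambda>w. cmod (f w)) X + L2_set (\<lambda>w. cmod (g w)) X"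
      by (rule L2_set_triangle_ineq)
    also have "L2_set (\<lambda>w. cmod (f w)) X \<le> l2norm f"
      unfolding L2_set_def l2norm_def
      by (intro real_sqrt_le_mono finite_sum_le_infsum sa X) auto
    also have "L2_set (\<lambda>w. cmod (g w)) X \<le> l2norm g"
      unfolding L2_set_def l2norm_def
      by (intro real_sqrt_le_mono finite_sum_le_infsum sb X) auto
    finally have h: "L2_set (\<lambda>w. cmod (f w + g w)) X \<le> l2norm f + l2norm g" by simp
    have "sum ?c X = (L2_set (\<lambda>w. cmod (f w + g w)) X)\<^sup>2"
      unfolding L2_set_def by (simp add: sum_nonneg)
    also have "\<dots> \<le> (l2norm f + l2norm g)\<^sup>2"
      by (rule power_mono[OF h L2_set_nonneg])
    finally show ?thesis .
  qed
  have "infsum ?c UNIV = (SUP X\<in>{X. finite X \<and> X \<subseteq> UNIV}. sum ?c X)"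
    by (rule infsum_nonneg_is_SUPREMUM_real[OF sc]) auto
  also have "\<dots> \<le> (l2norm f + l2norm g)\<^sup>2"
    by (rule cSUP_least) (auto intro: fin)
  finally have "infsum ?c UNIV \<le> (l2norm f + l2norm g)\<^sup>2" .
  then have "sqrt (infsum ?c UNIV) \<le> sqrt ((l2norm f + l2norm g)\<^sup>2)"
    by (rule real_sqrt_le_mono)
  also have "\<dots> = l2norm f + l2norm g"
    using l2norm_nonneg[of f] l2norm_nonneg[of g] by simp
  finally have "sqrt (infsum ?c UNIV) \<le> l2norm f + l2norm g" .
  then show ?thesis by (simp add: l2norm_def vadd_def)
qed

lemma l2_pullback:
  assumes sf: "(\<lambda>w. (cmod (f w))\<^sup>2) summable_on UNIV"
    and inj: "inj_on \<phi> D" and out: "\<And>u. u \<notin> D \<Longrightarrow> h u = 0"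
    and le: "\<And>u. u \<in> D \<Longrightarrow> cmod (h u) \<le> cmod (f (\<phi> u))"
  shows "(\<lambda>w. (cmod (h w))\<^sup>2) summable_on UNIV \<and> l2norm h \<le> l2norm f"
proof -
  let ?q = "\<lambda>w. (cmod (f w))\<^sup>2" and ?p = "\<lambda>w. (cmod (h w))\<^sup>2"
  have "?q summable_on (\<phi> ` D)" using sf by (rule summable_on_subset) auto
  then have s1: "(?q \<circ> \<phi>) summable_on D" using summable_on_reindex[OF inj] by blast
  have s2: "?p summable_on D"
    by (rule summable_on_comparison_test[OF s1]) (auto intro: power_mono le)
  have s3: "?p summable_on UNIV"
    using s2 by (subst summable_on_cong_neutral[where g="?p" and T=D]) (auto simp: out)
  have "infsum ?p UNIV = infsum ?p D"
    by (rule infsum_cong_neutral) (auto simp: out)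
  also have "\<dots> \<le> infsum (?q \<circ> \<phi>) D"
    by (rule infsum_mono[OF s2 s1]) (auto intro: power_mono le)
  also have "\<dots> = infsum ?q (\<phi> ` D)" by (rule infsum_reindex[OF inj, symmetric])
  also have "\<dots> \<le> infsum ?q UNIV"
    by (rule infsum_mono_neutral) (auto intro: summable_on_subset[OF sf] sf)
  finally show ?thesis using s3 by (simp add: l2norm_def)
qed


section \<open>Bounded operators\<close>

lemma BOpD:
  assumes "T \<in> BOp F"
  shows "\<And>f. f \<notin> ell2 F \<Longrightarrow> T f = (\<lambda>_. 0)"
    and "\<And>f. f \<in> ell2 F \<Longrightarrow> T f \<in> ell2 F"
    and "\<And>f g. f \<in> ell2 F \<Longrightarrow> g \<in> ell2 F \<Longrightarrow> T (vadd f g) = vadd (T f) (T g)"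
    and "\<And>c f. f \<in> ell2 F \<Longrightarrow> T (vsmul c f) = vsmul c (T f)"
    and "\<exists>C. \<forall>f\<in>ell2 F. l2norm (T f) \<le> C * l2norm f"
  using assms by (auto simp: BOp_def)

lemma vsmul_zero: "vsmul 0 f = (\<lambda>_. 0)" by (simp add: vsmul_def)

lemma BOp_zero: "T \<in> BOp F \<Longrightarrow> T (\<lambda>_. 0) = (\<lambda>_. 0)"
proof -
  assume T: "T \<in> BOp F"
  have "T (vsmul 0 (\<lambda>_. 0)) = vsmul 0 (T (\<lambda>_. 0))" by (rule BOpD(4)[OF T ell2_zero])
  then show ?thesis by (simp add: vsmul_zero)
qed

lemma opnorm_set_nonempty: "{l2norm (T f) | f. f \<in> ell2 F \<and> l2norm f \<le> 1} \<noteq> {}"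
proof -
  have "l2norm (T (\<lambda>_. 0)) \<in> {l2norm (T f) | f. f \<in> ell2 F \<and> l2norm f \<le> 1}"
    unfolding mem_Collect_eq by (rule exI[where x="\<lambda>_. 0"]) (simp add: ell2_zero l2norm_zero)
  then show ?thesis by blast
qed

lemma opnorm_bdd:
  assumes "T \<in> BOp F"
  shows "bdd_above {l2norm (T f) | f. f \<in> ell2 F \<and> l2norm f \<le> 1}"
proof -
  obtain C where C: "\<forall>f\<in>ell2 F. l2norm (T f) \<le> C * l2norm f" using BOpD(5)[OF assms] by blast
  have "l2norm (T f) \<le> \<bar>C\<bar>" if "f \<in> ell2 F" "l2norm f \<le> 1" for f
  proof -
    have "l2norm (T f) \<le> C * l2norm f" using C that by blast
    also have "\<dots> \<le> \<bar>C\<bar> * l2norm f" using l2norm_nonneg[of f] by (intro mult_right_mono) auto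
    also have "\<dots> \<le> \<bar>C\<bar>" using that by (simp add: mult_left_le)
    finally show ?thesis .
  qed
  then show ?thesis by (auto intro!: bdd_aboveI[where M="\<bar>C\<bar>"])
qed

lemma opnorm_upper:
  "T \<in> BOp F \<Longrightarrow> f \<in> ell2 F \<Longrightarrow> l2norm f \<le> 1 \<Longrightarrow> l2norm (T f) \<le> opnorm F T"
proof -
  assume T: "T \<in> BOp F" and f: "f \<in> ell2 F" and n: "l2norm f \<le> 1"
  have m: "l2norm (T f) \<in> {l2norm (T f) | f. f \<in> ell2 F \<and> l2norm f \<le> 1}"
    unfolding mem_Collect_eq by (rule exI[where x=f]) (simp add: f n)
  show ?thesis unfolding opnorm_def by (rule cSup_upper[OF m opnorm_bdd[OF T]])
qed

lemma opnorm_nonneg: "T \<in> BOp F \<Longrightarrow> 0 \<le> opnorm F T"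
proof -
  assume T: "T \<in> BOp F"
  have "l2norm (T (\<lambda>_. 0)) \<le> opnorm F T"
    by (rule opnorm_upper[OF T ell2_zero]) (simp add: l2norm_zero)
  then show ?thesis using l2norm_nonneg[of "T (\<lambda>_. 0)"] by linarith
qed

lemma opnorm_le:
  assumes "\<And>f. f \<in> ell2 F \<Longrightarrow> l2norm f \<le> 1 \<Longrightarrow> l2norm (T f) \<le> M"
  shows "opnorm F T \<le> M"
  unfolding opnorm_def by (rule cSup_least[OF opnorm_set_nonempty]) (use assms in auto)

lemma opnorm_bound:
  assumes T: "T \<in> BOp F" and f: "f \<in> ell2 F"
  shows "l2norm (T f) \<le> opnorm F T * l2norm f"
proof (cases "l2norm f = 0")
  case True
  obtain C where C: "\<forall>f\<in>ell2 F. l2norm (T f) \<le> C * l2norm f" using BOpD(5)[OF T] by blast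
  then have "l2norm (T f) \<le> C * l2norm f" using f by blast
  then have "l2norm (T f) \<le> 0" using True by simp
  then show ?thesis using True l2norm_nonneg[of "T f"] by simp
next
  case False
  then have pos: "l2norm f > 0" using l2norm_nonneg[of f] by simp
  let ?g = "vsmul (complex_of_real (1 / l2norm f)) f"
  have g: "?g \<in> ell2 F" using f by (rule ell2_vsmul)
  have ng: "l2norm ?g = 1" using pos by (simp add: l2norm_vsmul norm_divide)
  have "l2norm (T ?g) = l2norm (T f) / l2norm f"
    using pos by (simp add: BOpD(4)[OF T f] l2norm_vsmul norm_divide)
  moreover have "l2norm (T ?g) \<le> opnorm F T" using opnorm_upper[OF T g] ng by simp
  ultimately have "l2norm (T f) / l2norm f \<le> opnorm F T" by simp
  then show ?thesis using pos by (simp add: pos_divide_le_eq)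
qed

lemma BOpI:
  assumes "\<And>f. f \<notin> ell2 F \<Longrightarrow> T f = (\<lambda>_. 0)"
    and "\<And>f. f \<in> ell2 F \<Longrightarrow> T f \<in> ell2 F"
    and "\<And>f g. f \<in> ell2 F \<Longrightarrow> g \<in> ell2 F \<Longrightarrow> T (vadd f g) = vadd (T f) (T g)"
    and "\<And>c f. f \<in> ell2 F \<Longrightarrow> T (vsmul c f) = vsmul c (T f)"
    and "\<And>f. f \<in> ell2 F \<Longrightarrow> l2norm (T f) \<le> C * l2norm f"
  shows "T \<in> BOp F"
  unfolding BOp_def mem_Collect_eq
  apply (intro conjI)
  subgoal using assms(1) by blast
  subgoal using assms(2) by blast
  subgoal using assms(3) by blast
  subgoal using assms(4) by blast
  subgoal using assms(5) by blast
  done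

lemma BOp_oadd:
  assumes S: "S \<in> BOp F" and T: "T \<in> BOp F"
  shows "oadd S T \<in> BOp F"
proof -
  obtain C where C: "\<forall>f\<in>ell2 F. l2norm (S f) \<le> C * l2norm f" using BOpD(5)[OF S] by blast
  obtain D where D: "\<forall>f\<in>ell2 F. l2norm (T f) \<le> D * l2norm f" using BOpD(5)[OF T] by blast
  have "l2norm (oadd S T f) \<le> (C + D) * l2norm f" if f: "f \<in> ell2 F" for f
  proof -
    have "l2norm (oadd S T f) \<le> l2norm (S f) + l2norm (T f)"
      unfolding oadd_def by (rule l2norm_triangle[OF BOpD(2)[OF S f] BOpD(2)[OF T f]])
    also have "\<dots> \<le> C * l2norm f + D * l2norm f" using C D f by (intro add_mono) auto
    also have "\<dots> = (C + D) * l2norm f" by (simp add: distrib_right)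
    finally show ?thesis .
  qed
  note bd = this
  have lin: "oadd S T (vadd f g) = vadd (oadd S T f) (oadd S T g)"
    if "f \<in> ell2 F" "g \<in> ell2 F" for f g
    by (simp only: oadd_def BOpD(3)[OF S that] BOpD(3)[OF T that]) (simp add: vadd_def add_ac)
  have sm: "oadd S T (vsmul c f) = vsmul c (oadd S T f)" if "f \<in> ell2 F" for c f
    by (simp only: oadd_def BOpD(4)[OF S that] BOpD(4)[OF T that]) (simp add: vadd_def vsmul_def distrib_left)
  have z: "oadd S T f = (\<lambda>_. 0)" if "f \<notin> ell2 F" for f
    unfolding oadd_def vadd_def using BOpD(1)[OF T that] BOpD(1)[OF S that] by simp
  have e: "oadd S T f \<in> ell2 F" if "f \<in> ell2 F" for f
    unfolding oadd_def using ell2_vadd[OF BOpD(2)[OF S that] BOpD(2)[OF T that]] .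
  show ?thesis by (rule BOpI[OF z e lin sm bd])
qed


lemma BOp_osmul:
  assumes T: "T \<in> BOp F"
  shows "osmul c T \<in> BOp F"
proof -
  obtain C where C: "\<forall>f\<in>ell2 F. l2norm (T f) \<le> C * l2norm f" using BOpD(5)[OF T] by blast
  have bd: "l2norm (osmul c T f) \<le> (cmod c * C) * l2norm f" if f: "f \<in> ell2 F" for f
  proof -
    have "l2norm (osmul c T f) = cmod c * l2norm (T f)" by (simp add: osmul_def l2norm_vsmul)
    also have "\<dots> \<le> cmod c * (C * l2norm f)" using C f by (intro mult_left_mono) auto
    finally show ?thesis by (simp add: mult.assoc)
  qed
  have lin: "osmul c T (vadd f g) = vadd (osmul c T f) (osmul c T g)"
    if "f \<in> ell2 F" "g \<in> ell2 F" for f g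
    by (simp only: osmul_def BOpD(3)[OF T that]) (simp add: vadd_def vsmul_def distrib_left)
  have sm: "osmul c T (vsmul d f) = vsmul d (osmul c T f)" if "f \<in> ell2 F" for d f
    by (simp only: osmul_def BOpD(4)[OF T that]) (simp add: vsmul_def ac_simps)
  have z: "osmul c T f = (\<lambda>_. 0)" if "f \<notin> ell2 F" for f
    unfolding osmul_def vsmul_def using BOpD(1)[OF T that] by simp
  have e: "osmul c T f \<in> ell2 F" if "f \<in> ell2 F" for f
    unfolding osmul_def using ell2_vsmul[OF BOpD(2)[OF T that]] .
  show ?thesis by (rule BOpI[OF z e lin sm bd])
qed

lemma BOp_ocomp:
  assumes S: "S \<in> BOp F" and T: "T \<in> BOp F"
  shows "ocomp S T \<in> BOp F"
proof -
  have bd: "l2norm (ocomp S T f) \<le> (opnorm F S * opnorm F T) * l2norm f" if f: "f \<in> ell2 F" for f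
  proof -
    have "l2norm (ocomp S T f) \<le> opnorm F S * l2norm (T f)"
      unfolding ocomp_def by (rule opnorm_bound[OF S BOpD(2)[OF T f]])
    also have "\<dots> \<le> opnorm F S * (opnorm F T * l2norm f)"
      by (rule mult_left_mono[OF opnorm_bound[OF T f] opnorm_nonneg[OF S]])
    finally show ?thesis by (simp add: mult.assoc)
  qed
  have lin: "ocomp S T (vadd f g) = vadd (ocomp S T f) (ocomp S T g)"
    if "f \<in> ell2 F" "g \<in> ell2 F" for f g
    by (simp only: ocomp_def BOpD(3)[OF T that] BOpD(3)[OF S BOpD(2)[OF T that(1)] BOpD(2)[OF T that(2)]])
  have sm: "ocomp S T (vsmul c f) = vsmul c (ocomp S T f)" if "f \<in> ell2 F" for c f
    by (simp only: ocomp_def BOpD(4)[OF T that] BOpD(4)[OF S BOpD(2)[OF T that]])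
  have z: "ocomp S T f = (\<lambda>_. 0)" if "f \<notin> ell2 F" for f
    unfolding ocomp_def using BOpD(1)[OF T that] BOp_zero[OF S] by simp
  have e: "ocomp S T f \<in> ell2 F" if "f \<in> ell2 F" for f
    unfolding ocomp_def using BOpD(2)[OF S BOpD(2)[OF T that]] .
  show ?thesis by (rule BOpI[OF z e lin sm bd])
qed

lemma osub_eq: "osub S T = oadd S (osmul (-1) T)"
  by (simp add: osub_def oadd_def osmul_def vadd_def vsmul_def fun_eq_iff)

lemma BOp_osub: "S \<in> BOp F \<Longrightarrow> T \<in> BOp F \<Longrightarrow> osub S T \<in> BOp F"
  unfolding osub_eq by (intro BOp_oadd BOp_osmul)

lemma opnorm_osub_self: "opnorm F (osub T T) = 0"
proof -
  have e: "osub T T f = (\<lambda>_. 0)" for f by (simp add: osub_def)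
  have "{l2norm (osub T T f) | f. f \<in> ell2 F \<and> l2norm f \<le> 1} = {0}"
    using opnorm_set_nonempty[of "osub T T" F] unfolding e l2norm_zero by blast
  then show ?thesis by (simp add: opnorm_def)
qed

section \<open>Generators\<close>

lemma Pop_BOp: "Pop V E r s v \<in> BOp (FP V E r s)"
proof -
  let ?F = "FP V E r s"
  let ?P = "Pop V E r s v"
  let ?D = "{u. u \<in> ?F \<and> prange r u = v}"
  have pb: "(\<lambda>w. (cmod (?P f w))\<^sup>2) summable_on UNIV \<and> l2norm (?P f) \<le> l2norm f"
    if f: "f \<in> ell2 ?F" for f
  proof (rule l2_pullback[where \<phi>=id and D="?D"])
    show "(\<lambda>w. (cmod (f w))\<^sup>2) summable_on UNIV" using f by (simp add: ell2_def)
  qed (use f in \<open>auto simp: Pop_def\<close>)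
  have bd: "l2norm (?P f) \<le> 1 * l2norm f" if f: "f \<in> ell2 ?F" for f
    using pb[OF f] by simp
  have e: "?P f \<in> ell2 ?F" if f: "f \<in> ell2 ?F" for f
    using pb[OF f] f by (simp add: ell2_def Pop_def)
  have z: "?P f = (\<lambda>_. 0)" if "f \<notin> ell2 ?F" for f
    using that by (simp add: Pop_def)
  have lin: "?P (vadd f g) = vadd (?P f) (?P g)" if "f \<in> ell2 ?F" "g \<in> ell2 ?F" for f g
  proof -
    have "vadd f g \<in> ell2 ?F" by (rule ell2_vadd[OF that])
    then show ?thesis using that by (simp add: Pop_def vadd_def fun_eq_iff)
  qed
  have sm: "?P (vsmul c f) = vsmul c (?P f)" if "f \<in> ell2 ?F" for c f
  proof -
    have "vsmul c f \<in> ell2 ?F" by (rule ell2_vsmul[OF that])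
    then show ?thesis using that by (simp add: Pop_def vsmul_def fun_eq_iff)
  qed
  show ?thesis by (rule BOpI[OF z e lin sm bd])
qed

definition tailmap :: "'e \<Rightarrow> ('e \<Rightarrow> 'v) \<Rightarrow> ('v + 'e list) \<Rightarrow> ('v + 'e list)" where
  "tailmap e s u = (case u of Inr (e' # rest) \<Rightarrow> (if rest = [] then Inl (s e) else Inr rest) | _ \<Rightarrow> u)"

lemma Lop_BOp: "Lop V E r s e \<in> BOp (FP V E r s)"
proof -
  let ?F = "FP V E r s"
  let ?L = "Lop V E r s e"
  let ?D = "{u. u \<in> ?F \<and> (\<exists>rest. u = Inr (e # rest))}"
  have inj: "inj_on (tailmap e s) ?D"
    by (auto simp: inj_on_def tailmap_def split: if_splits)
  have pb: "(\<lambda>w. (cmod (?L f w))\<^sup>2) summable_on UNIV \<and> l2norm (?L f) \<le> l2norm f"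
    if f: "f \<in> ell2 ?F" for f
  proof (rule l2_pullback[where \<phi>="tailmap e s" and D="?D", OF _ inj])
    show "(\<lambda>w. (cmod (f w))\<^sup>2) summable_on UNIV" using f by (simp add: ell2_def)
    show "?L f u = 0" if "u \<notin> ?D" for u
      using that f by (auto simp: Lop_def split: sum.splits list.splits)
    show "cmod (?L f u) \<le> cmod (f (tailmap e s u))" if "u \<in> ?D" for u
      using that f by (auto simp: Lop_def tailmap_def)
  qed
  have bd: "l2norm (?L f) \<le> 1 * l2norm f" if f: "f \<in> ell2 ?F" for f
    using pb[OF f] by simp
  have e: "?L f \<in> ell2 ?F" if f: "f \<in> ell2 ?F" for f
    using pb[OF f] f by (simp add: ell2_def Lop_def)
  have z: "?L f = (\<lambda>_. 0)" if "f \<notin> ell2 ?F" for f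
    using that by (simp add: Lop_def)
  have lin: "?L (vadd f g) = vadd (?L f) (?L g)" if "f \<in> ell2 ?F" "g \<in> ell2 ?F" for f g
  proof -
    have "vadd f g \<in> ell2 ?F" by (rule ell2_vadd[OF that])
    then show ?thesis using that
      by (simp add: Lop_def vadd_def fun_eq_iff split: sum.split list.split)
  qed
  have sm: "?L (vsmul c f) = vsmul c (?L f)" if "f \<in> ell2 ?F" for c f
  proof -
    have "vsmul c f \<in> ell2 ?F" by (rule ell2_vsmul[OF that])
    then show ?thesis using that
      by (simp add: Lop_def vsmul_def fun_eq_iff split: sum.split list.split)
  qed
  show ?thesis by (rule BOpI[OF z e lin sm bd])
qed



section \<open>Closure of T_+(G)\<close>

lemma gen_alg_BOp:
  "S \<in> gen_alg (Lop V E r s ` E \<union> Pop V E r s ` V) \<Longrightarrow> S \<in> BOp (FP V E r s)"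
  by (induction rule: gen_alg.induct) (auto intro: Lop_BOp Pop_BOp BOp_oadd BOp_osmul BOp_ocomp)

lemma Tplus_BOp: "T \<in> Tplus V E r s \<Longrightarrow> T \<in> BOp (FP V E r s)"
  by (simp add: Tplus_def)

lemma Tplus_approx:
  "T \<in> Tplus V E r s \<Longrightarrow> \<epsilon> > 0 \<Longrightarrow>
    \<exists>S\<in>gen_alg (Lop V E r s ` E \<union> Pop V E r s ` V). opnorm (FP V E r s) (osub T S) < \<epsilon>"
  unfolding Tplus_def by blast

lemma gen_alg_Tplus:
  assumes S: "S \<in> gen_alg (Lop V E r s ` E \<union> Pop V E r s ` V)"
  shows "S \<in> Tplus V E r s"
proof -
  have "\<exists>S'\<in>gen_alg (Lop V E r s ` E \<union> Pop V E r s ` V). opnorm (FP V E r s) (osub S S') < \<epsilon>"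
    if "\<epsilon> > 0" for \<epsilon>
    using that S opnorm_osub_self[of "FP V E r s" S] by (intro bexI[of _ S]) auto
  then show ?thesis unfolding Tplus_def using gen_alg_BOp[OF S] by blast
qed

lemma osub_oadd_split:
  "osub (oadd T U) (oadd S S') f = vadd (osub T S f) (osub U S' f)"
  by (simp add: osub_def oadd_def vadd_def fun_eq_iff)

lemma Tplus_oadd:
  assumes T: "T \<in> Tplus V E r s" and U: "U \<in> Tplus V E r s"
  shows "oadd T U \<in> Tplus V E r s"
proof -
  let ?F = "FP V E r s" and ?G = "gen_alg (Lop V E r s ` E \<union> Pop V E r s ` V)"
  have TB: "T \<in> BOp ?F" and UB: "U \<in> BOp ?F" using T U by (auto simp: Tplus_def)
  have "\<exists>S\<in>?G. opnorm ?F (osub (oadd T U) S) < \<epsilon>" if eps: "\<epsilon> > 0" for \<epsilon>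
  proof -
    obtain S where S: "S \<in> ?G" "opnorm ?F (osub T S) < \<epsilon>/2"
      using Tplus_approx[OF T, of "\<epsilon>/2"] eps by auto
    obtain S' where S': "S' \<in> ?G" "opnorm ?F (osub U S') < \<epsilon>/2"
      using Tplus_approx[OF U, of "\<epsilon>/2"] eps by auto
    have B1: "osub T S \<in> BOp ?F" by (rule BOp_osub[OF TB gen_alg_BOp[OF S(1)]])
    have B2: "osub U S' \<in> BOp ?F" by (rule BOp_osub[OF UB gen_alg_BOp[OF S'(1)]])
    have "opnorm ?F (osub (oadd T U) (oadd S S')) \<le> opnorm ?F (osub T S) + opnorm ?F (osub U S')"
    proof (rule opnorm_le)
      fix f assume f: "f \<in> ell2 ?F" and n: "l2norm f \<le> 1"
      have "l2norm (osub (oadd T U) (oadd S S') f) \<le> l2norm (osub T S f) + l2norm (osub U S' f)"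
        unfolding osub_oadd_split by (rule l2norm_triangle[OF BOpD(2)[OF B1 f] BOpD(2)[OF B2 f]])
      also have "\<dots> \<le> opnorm ?F (osub T S) + opnorm ?F (osub U S')"
        by (intro add_mono opnorm_upper[OF B1 f n] opnorm_upper[OF B2 f n])
      finally show "l2norm (osub (oadd T U) (oadd S S') f) \<le> opnorm ?F (osub T S) + opnorm ?F (osub U S')" .
    qed
    moreover have "oadd S S' \<in> ?G" by (rule gen_alg.add[OF S(1) S'(1)])
    ultimately show ?thesis using S(2) S'(2) by (intro bexI[of _ "oadd S S'"]) auto
  qed
  then show ?thesis using BOp_oadd[OF TB UB] by (simp add: Tplus_def)
qed

lemma Tplus_osmul:
  assumes T: "T \<in> Tplus V E r s"
  shows "osmul c T \<in> Tplus V E r s"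
proof -
  let ?F = "FP V E r s" and ?G = "gen_alg (Lop V E r s ` E \<union> Pop V E r s ` V)"
  have TB: "T \<in> BOp ?F" using T by (auto simp: Tplus_def)
  have "\<exists>S\<in>?G. opnorm ?F (osub (osmul c T) S) < \<epsilon>" if eps: "\<epsilon> > 0" for \<epsilon>
  proof -
    have cpos: "cmod c + 1 > 0" using norm_ge_zero[of c] by linarith
    have dpos: "\<epsilon> / (cmod c + 1) > 0" using eps cpos by simp
    obtain S where S: "S \<in> ?G" "opnorm ?F (osub T S) < \<epsilon> / (cmod c + 1)"
      using Tplus_approx[OF T dpos] by auto
    have B1: "osub T S \<in> BOp ?F" by (rule BOp_osub[OF TB gen_alg_BOp[OF S(1)]])
    have "opnorm ?F (osub (osmul c T) (osmul c S)) \<le> cmod c * opnorm ?F (osub T S)"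
    proof (rule opnorm_le)
      fix f assume f: "f \<in> ell2 ?F" and n: "l2norm f \<le> 1"
      have "osub (osmul c T) (osmul c S) f = vsmul c (osub T S f)"
        by (simp add: osub_def osmul_def vsmul_def fun_eq_iff right_diff_distrib)
      then have "l2norm (osub (osmul c T) (osmul c S) f) = cmod c * l2norm (osub T S f)"
        by (simp add: l2norm_vsmul)
      also have "\<dots> \<le> cmod c * opnorm ?F (osub T S)"
        by (intro mult_left_mono opnorm_upper[OF B1 f n]) auto
      finally show "l2norm (osub (osmul c T) (osmul c S) f) \<le> cmod c * opnorm ?F (osub T S)" .
    qed
    also have "\<dots> \<le> (cmod c + 1) * opnorm ?F (osub T S)"
      using opnorm_nonneg[OF B1] by (intro mult_right_mono) auto
    also have "\<dots> < (cmod c + 1) * (\<epsilon> / (cmod c + 1))"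
      by (rule mult_strict_left_mono[OF S(2) cpos])
    also have "\<dots> = \<epsilon>" using cpos by simp
    finally have "opnorm ?F (osub (osmul c T) (osmul c S)) < \<epsilon>" .
    moreover have "osmul c S \<in> ?G" by (rule gen_alg.smul[OF S(1)])
    ultimately show ?thesis by blast
  qed
  then show ?thesis using BOp_osmul[OF TB] by (simp add: Tplus_def)
qed


lemma BOp_diff:
  assumes T: "T \<in> BOp F" and g: "g \<in> ell2 F" and h: "h \<in> ell2 F"
  shows "T (\<lambda>w. g w - h w) = (\<lambda>w. T g w - T h w)"
proof -
  have e: "(\<lambda>w. g w - h w) = vadd g (vsmul (-1) h)" by (simp add: vadd_def vsmul_def fun_eq_iff)
  show ?thesis unfolding e
    by (simp add: BOpD(3)[OF T g ell2_vsmul[OF h]] BOpD(4)[OF T h]) (simp add: vadd_def vsmul_def fun_eq_iff)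
qed

lemma arith_ocomp:
  fixes a b nT nU \<delta> \<epsilon> :: real
  assumes "0 \<le> a" "0 \<le> b" "0 \<le> nT" "0 \<le> nU" "a < \<delta>" "b < \<delta>" "\<delta> \<le> 1"
    and "\<delta> * (nT + nU + 2) \<le> \<epsilon>"
  shows "nT * b + a * (nU + b) < \<epsilon>"
proof -
  have 1: "nT * b \<le> nT * \<delta>" using assms by (intro mult_left_mono) auto
  have 2: "a * (nU + b) \<le> \<delta> * (nU + 1)" using assms by (intro mult_mono) auto
  have dp: "\<delta> > 0" using assms by linarith
  have "nT * b + a * (nU + b) \<le> \<delta> * (nT + nU + 1)" using 1 2 by (simp add: algebra_simps)
  also have "\<dots> < \<delta> * (nT + nU + 2)" using dp by (intro mult_strict_left_mono) auto
  finally show ?thesis using assms(8) by linarith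
qed

lemma Tplus_ocomp:
  assumes T: "T \<in> Tplus V E r s" and U: "U \<in> Tplus V E r s"
  shows "ocomp T U \<in> Tplus V E r s"
proof -
  let ?F = "FP V E r s" and ?G = "gen_alg (Lop V E r s ` E \<union> Pop V E r s ` V)"
  have TB: "T \<in> BOp ?F" and UB: "U \<in> BOp ?F" using T U by (auto simp: Tplus_def)
  let ?nT = "opnorm ?F T" and ?nU = "opnorm ?F U"
  have nT: "0 \<le> ?nT" and nU: "0 \<le> ?nU" using opnorm_nonneg[OF TB] opnorm_nonneg[OF UB] by auto
  have "\<exists>S\<in>?G. opnorm ?F (osub (ocomp T U) S) < \<epsilon>" if eps: "\<epsilon> > 0" for \<epsilon>
  proof -
    define \<delta> where "\<delta> = min 1 (\<epsilon> / (?nT + ?nU + 2))"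
    have Kp: "?nT + ?nU + 2 > 0" using nT nU by linarith
    have dpos: "\<delta> > 0" using eps Kp by (simp add: \<delta>_def)
    have d1: "\<delta> \<le> 1" by (simp add: \<delta>_def)
    have "\<delta> \<le> \<epsilon> / (?nT + ?nU + 2)" by (simp add: \<delta>_def)
    then have dK: "\<delta> * (?nT + ?nU + 2) \<le> \<epsilon>" using Kp by (simp add: pos_le_divide_eq)
    obtain S where S: "S \<in> ?G" "opnorm ?F (osub T S) < \<delta>"
      using Tplus_approx[OF T dpos] by auto
    obtain S' where S': "S' \<in> ?G" "opnorm ?F (osub U S') < \<delta>"
      using Tplus_approx[OF U dpos] by auto
    have SB: "S \<in> BOp ?F" and SB': "S' \<in> BOp ?F" using gen_alg_BOp S(1) S'(1) by auto
    have B1: "osub T S \<in> BOp ?F" by (rule BOp_osub[OF TB SB])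
    have B2: "osub U S' \<in> BOp ?F" by (rule BOp_osub[OF UB SB'])
    let ?a = "opnorm ?F (osub T S)" and ?b = "opnorm ?F (osub U S')"
    have "opnorm ?F (osub (ocomp T U) (ocomp S S')) \<le> ?nT * ?b + ?a * (?nU + ?b)"
    proof (rule opnorm_le)
      fix f assume f: "f \<in> ell2 ?F" and n: "l2norm f \<le> 1"
      have Uf: "U f \<in> ell2 ?F" and Sf: "S' f \<in> ell2 ?F" using BOpD(2)[OF UB f] BOpD(2)[OF SB' f] by auto
      have dec: "osub (ocomp T U) (ocomp S S') f = vadd (T (osub U S' f)) (osub T S (S' f))"
        using BOp_diff[OF TB Uf Sf] by (simp add: osub_def ocomp_def vadd_def fun_eq_iff)
      have e1: "T (osub U S' f) \<in> ell2 ?F" by (rule BOpD(2)[OF TB BOpD(2)[OF B2 f]])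
      have e2: "osub T S (S' f) \<in> ell2 ?F" by (rule BOpD(2)[OF B1 Sf])
      have n2: "l2norm (osub U S' f) \<le> ?b" by (rule opnorm_upper[OF B2 f n])
      have nUf: "l2norm (U f) \<le> ?nU" by (rule opnorm_upper[OF UB f n])
      have "S' f = vadd (U f) (vsmul (-1) (osub U S' f))"
        by (simp add: osub_def vadd_def vsmul_def fun_eq_iff)
      then have "l2norm (S' f) \<le> l2norm (U f) + l2norm (vsmul (-1) (osub U S' f))"
        using l2norm_triangle[OF Uf ell2_vsmul[OF BOpD(2)[OF B2 f]]] by simp
      then have nSf: "l2norm (S' f) \<le> ?nU + ?b" using nUf n2 by (simp add: l2norm_vsmul)
      have "l2norm (osub (ocomp T U) (ocomp S S') f) \<le> l2norm (T (osub U S' f)) + l2norm (osub T S (S' f))"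
        unfolding dec by (rule l2norm_triangle[OF e1 e2])
      also have "\<dots> \<le> ?nT * l2norm (osub U S' f) + ?a * l2norm (S' f)"
        by (intro add_mono opnorm_bound[OF TB BOpD(2)[OF B2 f]] opnorm_bound[OF B1 Sf])
      also have "\<dots> \<le> ?nT * ?b + ?a * (?nU + ?b)"
        using n2 nSf nT opnorm_nonneg[OF B1] by (intro add_mono mult_left_mono) auto
      finally show "l2norm (osub (ocomp T U) (ocomp S S') f) \<le> ?nT * ?b + ?a * (?nU + ?b)" .
    qed
    also have "\<dots> < \<epsilon>"
      by (rule arith_ocomp[OF opnorm_nonneg[OF B1] opnorm_nonneg[OF B2] nT nU S(2) S'(2) d1 dK])
    finally have "opnorm ?F (osub (ocomp T U) (ocomp S S')) < \<epsilon>" .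
    moreover have "ocomp S S' \<in> ?G" by (rule gen_alg.comp[OF S(1) S'(1)])
    ultimately show ?thesis by blast
  qed
  then show ?thesis using BOp_ocomp[OF TB UB] by (simp add: Tplus_def)
qed


definition Zop :: "('v, 'e) oper" where "Zop = (\<lambda>f. \<lambda>_. 0)"

lemma oadd_Zop: "oadd X Zop = X"
  by (simp add: oadd_def vadd_def Zop_def fun_eq_iff)

lemma Zop_Tplus: "x \<in> V \<Longrightarrow> Zop \<in> Tplus V E r s"
proof -
  assume x: "x \<in> V"
  have "Pop V E r s x \<in> gen_alg (Lop V E r s ` E \<union> Pop V E r s ` V)"
    using x by (intro gen_alg.gen) auto
  then have "osmul 0 (Pop V E r s x) \<in> Tplus V E r s"
    by (intro Tplus_osmul gen_alg_Tplus)
  moreover have "osmul 0 (Pop V E r s x) = Zop"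
    by (simp add: osmul_def vsmul_def Zop_def fun_eq_iff)
  ultimately show ?thesis by simp
qed

lemma repD:
  assumes "\<pi> \<in> rep_xy V E r s x y"
  shows "\<And>A B. A \<in> Tplus V E r s \<Longrightarrow> B \<in> Tplus V E r s \<Longrightarrow> \<pi> (oadd A B) = \<pi> A + \<pi> B"
    and "\<And>A B. A \<in> Tplus V E r s \<Longrightarrow> B \<in> Tplus V E r s \<Longrightarrow> \<pi> (ocomp A B) = \<pi> A ** \<pi> B"
    and "\<And>c A i j. A \<in> Tplus V E r s \<Longrightarrow> \<pi> (osmul c A) $ i $ j = c * (\<pi> A $ i $ j)"
    and "\<pi> ` Tplus V E r s = {M. M $ 1 $ 2 = 0}"
    and "\<pi> (Pop V E r s x) $ 1 $ 1 = 1"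
    and "\<pi> (Pop V E r s y) $ 2 $ 2 = 1"
proof -
  have n: "nest_rep V E r s \<pi>" and m1: "(\<lambda>A. \<pi> A $ 1 $ 1) \<in> Mchar V E r s x"
    and m2: "(\<lambda>A. \<pi> A $ 2 $ 2) \<in> Mchar V E r s y"
    using assms by (auto simp: rep_xy_def)
  note n' = n[unfolded nest_rep_def Let_def]
  show "\<And>A B. A \<in> Tplus V E r s \<Longrightarrow> B \<in> Tplus V E r s \<Longrightarrow> \<pi> (oadd A B) = \<pi> A + \<pi> B"
    using n' by blast
  show "\<And>A B. A \<in> Tplus V E r s \<Longrightarrow> B \<in> Tplus V E r s \<Longrightarrow> \<pi> (ocomp A B) = \<pi> A ** \<pi> B"
    using n' by blast
  show "\<And>c A i j. A \<in> Tplus V E r s \<Longrightarrow> \<pi> (osmul c A) $ i $ j = c * (\<pi> A $ i $ j)"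
    using n' by blast
  show "\<pi> ` Tplus V E r s = {M. M $ 1 $ 2 = 0}"
    using n' by blast
  show "\<pi> (Pop V E r s x) $ 1 $ 1 = 1" using m1 by (simp add: Mchar_def)
  show "\<pi> (Pop V E r s y) $ 2 $ 2 = 1" using m2 by (simp add: Mchar_def)
qed

lemma rep12: "\<pi> \<in> rep_xy V E r s x y \<Longrightarrow> A \<in> Tplus V E r s \<Longrightarrow> \<pi> A $ 1 $ 2 = 0"
  using repD(4)[of \<pi> V E r s x y] by blast

lemma repsurj: "\<pi> \<in> rep_xy V E r s x y \<Longrightarrow> M $ 1 $ 2 = 0 \<Longrightarrow> \<exists>B\<in>Tplus V E r s. \<pi> B = M"
  using repD(4)[of \<pi> V E r s x y] by (metis (mono_tags, lifting) imageE mem_Collect_eq)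

lemma repZ:
  assumes p: "\<pi> \<in> rep_xy V E r s x y" and x: "x \<in> V"
  shows "\<pi> Zop = 0"
proof -
  have "\<pi> (oadd Zop Zop) = \<pi> Zop + \<pi> Zop"
    using repD(1)[OF p Zop_Tplus[OF x] Zop_Tplus[OF x]] .
  then have "\<pi> Zop = \<pi> Zop + \<pi> Zop" by (simp only: oadd_Zop)
  then show ?thesis by (metis add_cancel_right_right)
qed

lemma Kxy_Tplus: "k \<in> Kxy V E r s x y \<Longrightarrow> k \<in> Tplus V E r s"
  by (simp add: Kxy_def)

lemma Kxy_pi: "k \<in> Kxy V E r s x y \<Longrightarrow> \<pi> \<in> rep_xy V E r s x y \<Longrightarrow> \<pi> k = 0"
  by (simp add: Kxy_def)

lemma KxyI: "k \<in> Tplus V E r s \<Longrightarrow> (\<And>\<pi>. \<pi> \<in> rep_xy V E r s x y \<Longrightarrow> \<pi> k = 0) \<Longrightarrow> k \<in> Kxy V E r s x y"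
  by (simp add: Kxy_def)

lemma Zop_Kxy: "x \<in> V \<Longrightarrow> Zop \<in> Kxy V E r s x y"
  by (intro KxyI Zop_Tplus repZ)

lemma Kxy_add:
  assumes k1: "k1 \<in> Kxy V E r s x y" and k2: "k2 \<in> Kxy V E r s x y"
  shows "oadd k1 k2 \<in> Kxy V E r s x y"
proof (rule KxyI)
  show "oadd k1 k2 \<in> Tplus V E r s" by (rule Tplus_oadd[OF Kxy_Tplus[OF k1] Kxy_Tplus[OF k2]])
  fix \<pi> assume p: "\<pi> \<in> rep_xy V E r s x y"
  show "\<pi> (oadd k1 k2) = 0"
    using repD(1)[OF p Kxy_Tplus[OF k1] Kxy_Tplus[OF k2]] Kxy_pi[OF k1 p] Kxy_pi[OF k2 p] by simp
qed

lemma Kxy_smul: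
  assumes k: "k \<in> Kxy V E r s x y"
  shows "osmul c k \<in> Kxy V E r s x y"
proof (rule KxyI)
  show "osmul c k \<in> Tplus V E r s" by (rule Tplus_osmul[OF Kxy_Tplus[OF k]])
  fix \<pi> assume p: "\<pi> \<in> rep_xy V E r s x y"
  show "\<pi> (osmul c k) = 0"
    by (simp add: vec_eq_iff repD(3)[OF p Kxy_Tplus[OF k]] Kxy_pi[OF k p])
qed

lemma self_coset: "Zop \<in> K \<Longrightarrow> X \<in> coset K X"
  unfolding coset_def using oadd_Zop[of X] by force

lemma qrep_coset: "Zop \<in> K \<Longrightarrow> \<exists>k\<in>K. qrep (coset K X) = oadd X k"
proof -
  assume "Zop \<in> K"
  then have "X \<in> coset K X" by (rule self_coset)
  then have "qrep (coset K X) \<in> coset K X" unfolding qrep_def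
    using someI_ex[of "\<lambda>A. A \<in> coset K X"] by blast
  then show ?thesis by (auto simp: coset_def)
qed

lemma qrep_props:
  assumes x: "x \<in> V" and X: "X \<in> Tplus V E r s"
  shows "qrep (coset (Kxy V E r s x y) X) \<in> Tplus V E r s \<and>
    (\<forall>\<pi>\<in>rep_xy V E r s x y. \<pi> (qrep (coset (Kxy V E r s x y) X)) = \<pi> X)"
proof -
  obtain k where k: "k \<in> Kxy V E r s x y" "qrep (coset (Kxy V E r s x y) X) = oadd X k"
    using qrep_coset[OF Zop_Kxy[OF x]] by blast
  have kT: "k \<in> Tplus V E r s" by (rule Kxy_Tplus[OF k(1)])
  have "\<pi> (oadd X k) = \<pi> X" if p: "\<pi> \<in> rep_xy V E r s x y" for \<pi>
    using repD(1)[OF p X kT] Kxy_pi[OF k(1) p] by simp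
  then show ?thesis unfolding k(2) using Tplus_oadd[OF X kT] by blast
qed

lemma diag_mult:
  fixes X Y :: "complex ^ 2 ^ 2"
  assumes "X $ 1 $ 2 = 0" "Y $ 1 $ 2 = 0"
  shows "(X ** Y) $ i $ i = X $ i $ i * Y $ i $ i"
proof -
  have "i = 1 \<or> i = 2" by (rule exhaust_2)
  then show ?thesis
  proof
    assume "i = 1" then show ?thesis using assms by (simp add: matrix_matrix_mult_def sum_2)
  next
    assume "i = 2" then show ?thesis using assms by (simp add: matrix_matrix_mult_def sum_2)
  qed
qed


lemma one_neq_two_2: "(1::2) \<noteq> 2" by simp

lemma mat_final:
  fixes A P Q :: "complex ^ 2 ^ 2"
  assumes "A$1$1 = 0" "A$1$2 = 0" "A$2$2 = 0" "P$1$1 = 1" "P$1$2 = 0" "P$2$2 = 0"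
    "Q$1$1 = 0" "Q$1$2 = 0" "Q$2$2 = 1"
  shows "Q ** (A ** P) = A"
  by (simp add: vec_eq_iff forall_2 matrix_matrix_mult_def sum_2 assms)

lemma Pop_orth: "x \<noteq> y \<Longrightarrow> ocomp (Pop V E r s x) (Pop V E r s y) = Zop"
  by (auto simp: Pop_def ocomp_def Zop_def fun_eq_iff)

lemma coset_eqI:
  assumes K: "\<And>k1 k2. k1 \<in> K \<Longrightarrow> k2 \<in> K \<Longrightarrow> oadd k1 k2 \<in> K"
    and D: "D \<in> K" and D': "osmul (-1) D \<in> K" and AB: "A = oadd B D"
  shows "coset K A = coset K B"
proof
  show "coset K A \<subseteq> coset K B"
  proof
    fix z assume "z \<in> coset K A"
    then obtain k where k: "k \<in> K" "z = oadd A k" by (auto simp: coset_def)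
    have "z = oadd B (oadd D k)" using k(2) AB by (simp add: oadd_def vadd_def fun_eq_iff add.assoc)
    then show "z \<in> coset K B" using K[OF D k(1)] by (auto simp: coset_def)
  qed
  show "coset K B \<subseteq> coset K A"
  proof
    fix z assume "z \<in> coset K B"
    then obtain k where k: "k \<in> K" "z = oadd B k" by (auto simp: coset_def)
    have "z = oadd A (oadd (osmul (-1) D) k)" using k(2) AB
      by (simp add: oadd_def vadd_def osmul_def vsmul_def fun_eq_iff)
    then show "z \<in> coset K A" using K[OF D' k(1)] by (auto simp: coset_def)
  qed
qed

theorem lemma2p8:
  fixes V :: "'v set" and E :: "'e set" and r s :: "'e \<Rightarrow> 'v" and x y :: 'v
    and A :: "('v, 'e) oper"
  assumes "graph V E r s" and "countable V" and "countable E"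
    and "x \<in> V" and "y \<in> V" and "x \<noteq> y"
    and "A \<in> Tplus V E r s"
    and "coset (Kxy V E r s x y) A \<in>
           jacobson_rad (quot_carrier (Tplus V E r s) (Kxy V E r s x y))
             (qadd (Kxy V E r s x y)) (qmul (Kxy V E r s x y))"
  shows "coset (Kxy V E r s x y) A =
         coset (Kxy V E r s x y) (ocomp (Pop V E r s y) (ocomp A (Pop V E r s x)))"
proof -
  let ?K = "Kxy V E r s x y" and ?T = "Tplus V E r s" and ?R = "rep_xy V E r s x y"
  let ?Px = "Pop V E r s x" and ?Py = "Pop V E r s y"
  have xV: "x \<in> V" and yV: "y \<in> V" and xy: "x \<noteq> y" and AT: "A \<in> ?T" using assms by auto
  have zK: "Zop \<in> ?K" by (rule Zop_Kxy[OF xV])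
  have PxT: "?Px \<in> ?T" using xV by (intro gen_alg_Tplus gen_alg.gen) auto
  have PyT: "?Py \<in> ?T" using yV by (intro gen_alg_Tplus gen_alg.gen) auto
  have rad': "\<forall>b\<in>quot_carrier ?T ?K. \<exists>c\<in>quot_carrier ?T ?K.
      qadd ?K c (qmul ?K b (coset ?K A)) = qmul ?K c (qmul ?K b (coset ?K A))"
    using assms(8) by (simp add: jacobson_rad_def)
  have diag0: "\<pi> A $ i $ i = 0" if p: "\<pi> \<in> ?R" for \<pi> i
  proof (rule ccontr)
    assume ne: "\<pi> A $ i $ i \<noteq> 0"
    define d where "d = \<pi> A $ i $ i"
    define M :: "complex ^ 2 ^ 2" where "M = (\<chi> j k. if j = i \<and> k = i then 1 / d else 0)"
    have M12: "M $ 1 $ 2 = 0" using one_neq_two_2 by (auto simp: M_def)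
    have Mii: "M $ i $ i = 1 / d" by (simp add: M_def)
    obtain B where BT: "B \<in> ?T" and pB: "\<pi> B = M" using repsurj[OF p M12] by blast
    have bq: "coset ?K B \<in> quot_carrier ?T ?K" using BT by (simp add: quot_carrier_def)
    obtain c where c: "c \<in> quot_carrier ?T ?K"
      and ceq: "qadd ?K c (qmul ?K (coset ?K B) (coset ?K A)) = qmul ?K c (qmul ?K (coset ?K B) (coset ?K A))"
      using rad' bq by blast
    obtain C where CT: "C \<in> ?T" and cC: "c = coset ?K C" using c by (auto simp: quot_carrier_def)
    let ?a' = "qrep (coset ?K A)" and ?b' = "qrep (coset ?K B)"
    have a'T: "?a' \<in> ?T" and pa': "\<pi> ?a' = \<pi> A" using qrep_props[OF xV AT, of y] p by auto
    have b'T: "?b' \<in> ?T" and pb': "\<pi> ?b' = \<pi> B" using qrep_props[OF xV BT, of y] p by auto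
    let ?m = "ocomp ?b' ?a'"
    have mT: "?m \<in> ?T" by (rule Tplus_ocomp[OF b'T a'T])
    have pm: "\<pi> ?m = \<pi> B ** \<pi> A" using repD(2)[OF p b'T a'T] pa' pb' by simp
    let ?m' = "qrep (coset ?K ?m)" and ?c' = "qrep (coset ?K C)"
    have m'T: "?m' \<in> ?T" and pm': "\<pi> ?m' = \<pi> ?m" using qrep_props[OF xV mT, of y] p by auto
    have c'T: "?c' \<in> ?T" and pc': "\<pi> ?c' = \<pi> C" using qrep_props[OF xV CT, of y] p by auto
    have "coset ?K (oadd ?c' ?m') = coset ?K (ocomp ?c' ?m')"
      using ceq unfolding cC by (simp add: qadd_def qmul_def)
    then have "oadd ?c' ?m' \<in> coset ?K (ocomp ?c' ?m')" using self_coset[OF zK, of "oadd ?c' ?m'"] by simp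
    then obtain k5 where k5: "k5 \<in> ?K" "oadd ?c' ?m' = oadd (ocomp ?c' ?m') k5"
      by (auto simp: coset_def)
    have "\<pi> (oadd ?c' ?m') = \<pi> C + \<pi> B ** \<pi> A" using repD(1)[OF p c'T m'T] pc' pm' pm by simp
    moreover have "\<pi> (oadd (ocomp ?c' ?m') k5) = \<pi> C ** (\<pi> B ** \<pi> A)"
      using repD(1)[OF p Tplus_ocomp[OF c'T m'T] Kxy_Tplus[OF k5(1)]] repD(2)[OF p c'T m'T]
        Kxy_pi[OF k5(1) p] pc' pm' pm by simp
    ultimately have eq: "\<pi> C + \<pi> B ** \<pi> A = \<pi> C ** (\<pi> B ** \<pi> A)" using k5(2) by simp
    have BA12: "(\<pi> B ** \<pi> A) $ 1 $ 2 = 0" using rep12[OF p mT] pm by simp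
    have BAii: "(\<pi> B ** \<pi> A) $ i $ i = 1"
      using diag_mult[OF rep12[OF p BT] rep12[OF p AT], of i] pB Mii ne by (simp add: d_def)
    have "(\<pi> C + \<pi> B ** \<pi> A) $ i $ i = (\<pi> C ** (\<pi> B ** \<pi> A)) $ i $ i" using eq by simp
    then have "\<pi> C $ i $ i + 1 = \<pi> C $ i $ i * 1"
      using diag_mult[OF rep12[OF p CT] BA12, of i] BAii by simp
    then show False by simp
  qed
  let ?B = "ocomp ?Py (ocomp A ?Px)"
  have APxT: "ocomp A ?Px \<in> ?T" by (rule Tplus_ocomp[OF AT PxT])
  have BT: "?B \<in> ?T" by (rule Tplus_ocomp[OF PyT APxT])
  have piB: "\<pi> ?B = \<pi> A" if p: "\<pi> \<in> ?R" for \<pi>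
  proof -
    have Z: "\<pi> Zop = 0" by (rule repZ[OF p xV])
    have o1: "\<pi> ?Px ** \<pi> ?Py = 0"
      using repD(2)[OF p PxT PyT] Pop_orth[OF xy, of V E r s] Z by simp
    have o2: "\<pi> ?Py ** \<pi> ?Px = 0"
      using repD(2)[OF p PyT PxT] Pop_orth[OF xy[symmetric], of V E r s] Z by simp
    have Px22: "\<pi> ?Px $ 2 $ 2 = 0"
      using diag_mult[OF rep12[OF p PxT] rep12[OF p PyT], of 2] o1 repD(6)[OF p] by simp
    have Py11: "\<pi> ?Py $ 1 $ 1 = 0"
      using diag_mult[OF rep12[OF p PyT] rep12[OF p PxT], of 1] o2 repD(5)[OF p] by simp
    have "\<pi> ?B = \<pi> ?Py ** (\<pi> A ** \<pi> ?Px)"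
      using repD(2)[OF p PyT APxT] repD(2)[OF p AT PxT] by simp
    also have "\<dots> = \<pi> A"
      by (rule mat_final[OF diag0[OF p] rep12[OF p AT] diag0[OF p] repD(5)[OF p] rep12[OF p PxT] Px22
            Py11 rep12[OF p PyT] repD(6)[OF p]])
    finally show ?thesis .
  qed
  let ?D = "oadd A (osmul (-1) ?B)"
  have DT: "?D \<in> ?T" by (rule Tplus_oadd[OF AT Tplus_osmul[OF BT]])
  have DK: "?D \<in> ?K"
  proof (rule KxyI[OF DT])
    fix \<pi> assume p: "\<pi> \<in> ?R"
    show "\<pi> ?D = 0"
      using repD(1)[OF p AT Tplus_osmul[OF BT]] repD(3)[OF p BT] piB[OF p]
      by (simp add: vec_eq_iff)
  qed
  show ?thesis
  proof (rule coset_eqI[OF Kxy_add DK Kxy_smul[OF DK]])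
    show "A = oadd ?B ?D" by (simp add: oadd_def vadd_def osmul_def vsmul_def fun_eq_iff)
  qed
qed

end
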